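(* There is an absolute constant $C>0$ such that for every integer $n\ge 2$, the cat can localize the mouse up to distance $8$ within time $C\log n$ on the grid $P_n\Box P_n$.
   Context: $P_n\Box P_n$ is the graph with vertex set $[n]\times[n]$ in which $(x,y)$ and $(x',y')$ are adjacent iff $|x-x'|+|y-y'|=1$. All graphs are finite, simple, undirected and connected. The game is played on a graph $G$ in discrete rounds $i=1,2,\ldots$. A game on $G$ is a pair of sequences $((m_i)_{i\in\mathbb N},(c_i)_{i\in\mathbb N})$ of vertices of $G$ such that $m_i\in N_G[m_{i-1}]$ (the closed neighborhood) for every $i\ge 2$; the $m_i$ are the mouse's positions and the $c_i$ (arbitrary vertices) are the cat's probes. Let $d_i=\mathrm{dist}_G(c_i,m_i)$, and for $i\ge2$ let $b_i=1$ if $d_i\le d_{i-1}$ and $b_i=0$ if $d_i>d_{i-1}$. The set $M_i$ is the set of all vertices $u$ for which there exist vertices $\tilde m_1,\ldots,\tilde m_i$ with $\tilde m_i=u$, $\tilde m_j\in N_G[\tilde m_{j-1}]$ for all $2\le j\le i$, and $\mathrm{dist}_G(c_j,\tilde m_j)\le \mathrm{dist}_G(c_{j-1},\tilde m_{j-1})$ if and only if $b_j=1$, for all $2\le j\le i$. For a vertex set $M$, $\mathrm{rad}_G(M)=\min_{u\in V(G)}\max_{m\in M}\mathrm{dist}_G(u,m)$. A strategy for the cat is a triple $(c_1,c_2;f)$ with $c_1,c_2\in V(G)$ and $f:\bigcup_{i\in\mathbb N}\{0,1\}^i\to V(G)$; the cat follows it in a game if its first two probes are $c_1,c_2$ and $c_{i+1}=f(b_2,\ldots,b_i)$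 for all $i\ge2$. The cat can localize the mouse up to distance $d$ within time $t$ on $G$ if there is a strategy $\sigma$ such that for every game on $G$ in which the cat follows $\sigma$, there is a positive integer $i\le t$ with $\mathrm{rad}_G(M_i)\le d$. *)

theory Defs
  imports Complex_Main
begin

fun walk :: "('a \<Rightarrow> 'a \<Rightarrow> bool) \<Rightarrow> nat \<Rightarrow> 'a \<Rightarrow> 'a \<Rightarrow> bool" where
  "walk E 0 u v = (u = v)"
| "walk E (Suc k) u v = (\<exists>w. E u w \<and> walk E k w v)"

definition gdist :: "('a \<Rightarrow> 'a \<Rightarrow> bool) \<Rightarrow> 'a \<Rightarrow> 'a \<Rightarrow> nat" where
  "gdist E u v = (LEAST k. walk E k u v)"

definition cnbhd :: "('a \<Rightarrow> 'a \<Rightarrow> bool) \<Rightarrow> 'a \<Rightarrow> 'a set" where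
  "cnbhd E u = {v. v = u \<or> E u v}"

text \<open>A game: mouse positions m and cat probes c, indexed from 1 (index 0 unused).\<close>
definition is_game :: "'a set \<Rightarrow> ('a \<Rightarrow> 'a \<Rightarrow> bool) \<Rightarrow> (nat \<Rightarrow> 'a) \<Rightarrow> (nat \<Rightarrow> 'a) \<Rightarrow> bool" where
  "is_game V E m c \<longleftrightarrow>
     (\<forall>i\<ge>1. m i \<in> V \<and> c i \<in> V) \<and> (\<forall>i\<ge>2. m i \<in> cnbhd E (m (i - 1)))"

definition answer :: "('a \<Rightarrow> 'a \<Rightarrow> bool) \<Rightarrow> (nat \<Rightarrow> 'a) \<Rightarrow> (nat \<Rightarrow> 'a) \<Rightarrow> nat \<Rightarrow> bool" where
  "answer E m c i \<longleftrightarrow> gdist E (c i) (m i) \<le> gdist E (c (i - 1)) (m (i - 1))"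

definition possible_set :: "'a set \<Rightarrow> ('a \<Rightarrow> 'a \<Rightarrow> bool) \<Rightarrow> (nat \<Rightarrow> 'a) \<Rightarrow> (nat \<Rightarrow> 'a) \<Rightarrow> nat \<Rightarrow> 'a set" where
  "possible_set V E m c i = {u. \<exists>mt :: nat \<Rightarrow> 'a.
      mt i = u \<and> (\<forall>j. 1 \<le> j \<and> j \<le> i \<longrightarrow> mt j \<in> V)
      \<and> (\<forall>j. 2 \<le> j \<and> j \<le> i \<longrightarrow> mt j \<in> cnbhd E (mt (j - 1)))
      \<and> (\<forall>j. 2 \<le> j \<and> j \<le> i \<longrightarrow>
            ((gdist E (c j) (mt j) \<le> gdist E (c (j - 1)) (mt (j - 1))) \<longleftrightarrow> answer E m c j))}"

definition grad :: "'a set \<Rightarrow> ('a \<Rightarrow> 'a \<Rightarrow> bool) \<Rightarrow> 'a set \<Rightarrow> nat" where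
  "grad V E M = Min ((\<lambda>u. Max ((\<lambda>x. gdist E u x) ` M)) ` V)"

text \<open>A strategy (c1, c2, f); f is applied to the answer string (b_2,...,b_i).\<close>
definition is_strategy :: "'a set \<Rightarrow> 'a \<Rightarrow> 'a \<Rightarrow> (bool list \<Rightarrow> 'a) \<Rightarrow> bool" where
  "is_strategy V c1 c2 f \<longleftrightarrow> c1 \<in> V \<and> c2 \<in> V \<and> (\<forall>bs. f bs \<in> V)"

definition follows :: "('a \<Rightarrow> 'a \<Rightarrow> bool) \<Rightarrow> 'a \<Rightarrow> 'a \<Rightarrow> (bool list \<Rightarrow> 'a)
    \<Rightarrow> (nat \<Rightarrow> 'a) \<Rightarrow> (nat \<Rightarrow> 'a) \<Rightarrow> bool" where
  "follows E c1 c2 f m c \<longleftrightarrow> c 1 = c1 \<and> c 2 = c2 \<and>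
     (\<forall>i\<ge>2. c (Suc i) = f (map (answer E m c) [2..<Suc i]))"

definition can_localize :: "'a set \<Rightarrow> ('a \<Rightarrow> 'a \<Rightarrow> bool) \<Rightarrow> nat \<Rightarrow> real \<Rightarrow> bool" where
  "can_localize V E d t \<longleftrightarrow>
     (\<exists>c1 c2 f. is_strategy V c1 c2 f \<and>
        (\<forall>m c. is_game V E m c \<and> follows E c1 c2 f m c \<longrightarrow>
           (\<exists>i::nat. 1 \<le> i \<and> real i \<le> t \<and> grad V E (possible_set V E m c i) \<le> d)))"

definition grid_V :: "nat \<Rightarrow> (nat \<times> nat) set" where
  "grid_V n = {1..n} \<times> {1..n}"

definition grid_E :: "nat \<Rightarrow> nat \<times> nat \<Rightarrow> nat \<times> nat \<Rightarrow> bool" where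
  "grid_E n p q \<longleftrightarrow> p \<in> grid_V n \<and> q \<in> grid_V n \<and>
     \<bar>int (fst p) - int (fst q)\<bar> + \<bar>int (snd p) - int (snd q)\<bar> = 1"

end

theory Submission
  imports Defs
begin


definition L1 :: "nat \<times> nat \<Rightarrow> nat \<times> nat \<Rightarrow> int" where
  "L1 p q = \<bar>int (fst p) - int (fst q)\<bar> + \<bar>int (snd p) - int (snd q)\<bar>"

lemma walk_L1: "walk (grid_E n) k p q \<Longrightarrow> L1 p q \<le> int k"
proof (induction k arbitrary: p)
  case 0 then show ?case by (simp add: L1_def)
next
  case (Suc k)
  then obtain w where w: "grid_E n p w" "walk (grid_E n) k w q" by auto
  have "L1 w q \<le> int k" using Suc.IH w(2) by simp
  moreover have "L1 p w = 1" using w(1) by (simp add: grid_E_def L1_def)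
  ultimately show ?case unfolding L1_def by linarith
qed

lemma walk_exists: "p \<in> grid_V n \<Longrightarrow> q \<in> grid_V n \<Longrightarrow> L1 p q = int k \<Longrightarrow> walk (grid_E n) k p q"
proof (induction k arbitrary: p)
  case 0 then show ?case by (cases p, cases q, auto simp add: L1_def abs_if split: if_splits)
next
  case (Suc k)
  obtain a b where p: "p = (a,b)" by (cases p)
  obtain c d where q: "q = (c,d)" by (cases q)
  have pa: "1 \<le> a" "a \<le> n" "1 \<le> b" "b \<le> n" using Suc.prems(1) p by (auto simp: grid_V_def)
  have qa: "1 \<le> c" "c \<le> n" "1 \<le> d" "d \<le> n" using Suc.prems(2) q by (auto simp: grid_V_def)
  have L: "\<bar>int a - int c\<bar> + \<bar>int b - int d\<bar> = int k + 1" using Suc.prems(3) p q by (simp add: L1_def)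
  define w where "w = (if a < c then (Suc a, b) else if c < a then (a - 1, b) else if b < d then (a, Suc b) else (a, b - 1))"
  have wV: "w \<in> grid_V n" using pa qa L by (auto simp: w_def grid_V_def)
  have E: "grid_E n p w" using pa qa L wV Suc.prems(1) p by (auto simp: w_def grid_E_def)
  have Lw: "L1 w q = int k" using pa qa L q by (auto simp: w_def L1_def)
  have "walk (grid_E n) k w q" using Suc.IH[OF wV Suc.prems(2) Lw] .
  then show ?case using E by (cases w) auto
qed

lemma gdist_grid: "p \<in> grid_V n \<Longrightarrow> q \<in> grid_V n \<Longrightarrow> int (gdist (grid_E n) p q) = L1 p q"
proof -
  assume a: "p \<in> grid_V n" "q \<in> grid_V n"
  have nn: "L1 p q \<ge> 0" by (simp add: L1_def)
  have "gdist (grid_E n) p q = nat (L1 p q)"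
    unfolding gdist_def
  proof (rule Least_equality)
    show "walk (grid_E n) (nat (L1 p q)) p q" using walk_exists[OF a] nn by simp
    show "\<And>y. walk (grid_E n) y p q \<Longrightarrow> nat (L1 p q) \<le> y" using walk_L1 by fastforce
  qed
  then show ?thesis using nn by simp
qed


definition tgt :: "int \<Rightarrow> int \<times> int \<Rightarrow> int" where
  "tgt N I = max 4 (min (2*N - 2) (fst I + snd I))"
definition base :: "int \<Rightarrow> int \<Rightarrow> int" where "base N t = (if t \<le> N + 1 then 1 else N)"
definition hcut :: "int \<Rightarrow> int \<Rightarrow> int" where
  "hcut N t = (if t \<le> N + 1 then t div 2 else (t + 1) div 2)"
definition cut :: "int \<Rightarrow> int \<times> int \<Rightarrow> bool \<Rightarrow> int \<times> int" where
  "cut N I b = (if b = (tgt N I \<le> N + 1) then (max (fst I) (hcut N (tgt N I)), snd I)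
                else (fst I, min (snd I) (hcut N (tgt N I))))"

lemma thr1:
  fixes a b q x y x' y' :: int
  assumes "\<bar>x - x'\<bar> + \<bar>y - y'\<bar> \<le> 1" "a + 1 < b"
  shows "(\<bar>x - b\<bar> + \<bar>y - q\<bar> \<le> \<bar>x' - a\<bar> + \<bar>y' - q\<bar>) \<Longrightarrow> a + b \<le> 2*x + 1"
    and "\<not>(\<bar>x - b\<bar> + \<bar>y - q\<bar> \<le> \<bar>x' - a\<bar> + \<bar>y' - q\<bar>) \<Longrightarrow> 2*x \<le> a + b"
  using assms by (auto simp: abs_if split: if_splits)

lemma thr2:
  fixes a b q x y x' y' :: int
  assumes "\<bar>x - x'\<bar> + \<bar>y - y'\<bar> \<le> 1" "b + 1 < a"
  shows "(\<bar>x - b\<bar> + \<bar>y - q\<bar> \<le> \<bar>x' - a\<bar> + \<bar>y' - q\<bar>) \<Longrightarrow> 2*x \<le> a + b + 1"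
    and "\<not>(\<bar>x - b\<bar> + \<bar>y - q\<bar> \<le> \<bar>x' - a\<bar> + \<bar>y' - q\<bar>) \<Longrightarrow> a + b \<le> 2*x"
  using assms by (auto simp: abs_if split: if_splits)

lemma thr_cut:
  fixes N t x y x' y' q :: int
  assumes N: "N \<ge> 3" and t: "4 \<le> t" "t \<le> 2*N - 2"
    and d: "\<bar>x - x'\<bar> + \<bar>y - y'\<bar> \<le> 1"
    and bb: "bb = (\<bar>x - (t - base N t)\<bar> + \<bar>y - q\<bar> \<le> \<bar>x' - base N t\<bar> + \<bar>y' - q\<bar>)"
  shows "(bb = (t \<le> N + 1) \<longrightarrow> hcut N t \<le> x) \<and> (bb \<noteq> (t \<le> N + 1) \<longrightarrow> x \<le> hcut N t)"
proof (cases "t \<le> N + 1")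
  case True
  then have ab: "base N t = 1" "hcut N t = t div 2" by (auto simp: base_def hcut_def)
  have l: "1 + 1 < t - 1" using t by simp
  have h1: "bb \<Longrightarrow> t \<le> 2*x + 1" using thr1(1)[OF d l, of q] bb ab by simp
  have h2: "\<not> bb \<Longrightarrow> 2*x \<le> t" using thr1(2)[OF d l, of q] bb ab by simp
  have "bb \<Longrightarrow> t div 2 \<le> x" using h1 by presburger
  moreover have "\<not> bb \<Longrightarrow> x \<le> t div 2" using h2 by presburger
  ultimately show ?thesis using ab True by auto
next
  case False
  then have ab: "base N t = N" "hcut N t = (t+1) div 2" by (auto simp: base_def hcut_def)
  have l: "t - N + 1 < N" using t by simp
  have h1: "bb \<Longrightarrow> 2*x \<le> t + 1" using thr2(1)[OF d l, of q] bb ab by simp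
  have h2: "\<not> bb \<Longrightarrow> t \<le> 2*x" using thr2(2)[OF d l, of q] bb ab by simp
  have "bb \<Longrightarrow> x \<le> (t+1) div 2" using h1 by presburger
  moreover have "\<not> bb \<Longrightarrow> (t+1) div 2 \<le> x" using h2 by presburger
  ultimately show ?thesis using ab False by auto
qed

lemma cut_width:
  fixes N A B :: int
  assumes "1 \<le> A" "B \<le> N"
  shows "snd (cut N (A,B) b) - fst (cut N (A,B) b) \<le> (B - A + 1) div 2"
  using assms by (auto simp: cut_def tgt_def hcut_def)


definition drift :: "int \<Rightarrow> int \<times> int \<Rightarrow> int \<times> int" where
  "drift N I = (max 1 (fst I - 1), min N (snd I + 1))"

type_synonym state = "(int \<times> int) \<times> (int \<times> int) \<times> (int \<times> int)"

definition probe :: "int \<Rightarrow> nat \<Rightarrow> state \<Rightarrow> int \<times> int" where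
  "probe N i s = (if (i - 1) mod 6 = 0 then
        (base N (tgt N (drift N (drift N (fst s)))), base N (tgt N (drift N (drift N (drift N (fst (snd s)))))))
     else if (i - 1) mod 6 = 3 then
        (base N (tgt N (drift N (drift N (drift N (fst s))))), base N (tgt N (drift N (drift N (fst (snd s))))))
     else if (i - 1) mod 6 = 1 \<or> (i - 1) mod 6 = 5 then
        (tgt N (drift N (fst s)) - fst (snd (snd s)), snd (snd (snd s)))
     else (fst (snd (snd s)), tgt N (drift N (fst (snd s))) - snd (snd (snd s))))"

definition step :: "int \<Rightarrow> nat \<Rightarrow> state \<Rightarrow> bool \<Rightarrow> state" where
  "step N i s b =
     (if (i - 1) mod 6 = 1 \<or> (i - 1) mod 6 = 5 then cut N (drift N (fst s)) b else drift N (fst s),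
      if (i - 1) mod 6 = 2 \<or> (i - 1) mod 6 = 4 then cut N (drift N (fst (snd s))) b else drift N (fst (snd s)),
      probe N i s)"

definition S0 :: "int \<Rightarrow> state" where "S0 N = ((1, N), (1, N), (1, 1))"

fun runf :: "int \<Rightarrow> nat \<Rightarrow> state \<Rightarrow> bool list \<Rightarrow> state" where
  "runf N i s [] = s"
| "runf N i s (b # bs) = runf N (Suc i) (step N i s b) bs"

definition stl :: "int \<Rightarrow> bool list \<Rightarrow> state" where
  "stl N bs = runf N 2 (step N 1 (S0 N) False) bs"

definition toV :: "int \<Rightarrow> int \<times> int \<Rightarrow> nat \<times> nat" where
  "toV N p = (nat (max 1 (min N (fst p))), nat (max 1 (min N (snd p))))"

definition fstrat :: "int \<Rightarrow> bool list \<Rightarrow> nat \<times> nat" where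
  "fstrat N bs = toV N (probe N (length bs + 2) (stl N bs))"

fun Sg :: "int \<Rightarrow> (nat \<Rightarrow> bool) \<Rightarrow> nat \<Rightarrow> state" where
  "Sg N B 0 = S0 N"
| "Sg N B (Suc i) = step N (Suc i) (Sg N B i) (B (Suc i))"

lemma runf_snoc: "runf N i s (xs @ [b]) = step N (i + length xs) (runf N i s xs) b"
  by (induction xs arbitrary: i s) auto

lemma stl_Sg: "1 \<le> i \<Longrightarrow> stl N (map B [2..<Suc i]) = Sg N B i"
proof (induction i)
  case 0 then show ?case by simp
next
  case (Suc i)
  show ?case
  proof (cases "i = 0")
    case True
    then show ?thesis by (simp add: stl_def step_def)
  next
    case False
    then have u: "[2..<Suc (Suc i)] = [2..<Suc i] @ [Suc i]" by (simp del: upt_Suc add: upt_Suc_append)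
    have e: "2 + length (map B [2..<Suc i]) = Suc i" using False by auto
    have "stl N (map B [2..<Suc (Suc i)]) = step N (Suc i) (stl N (map B [2..<Suc i])) (B (Suc i))"
      unfolding u stl_def map_append list.map runf_snoc e by (rule refl)
    also have "\<dots> = step N (Suc i) (Sg N B i) (B (Suc i))"
      using Suc.IH False by (metis One_nat_def Suc_leI neq0_conv)
    also have "\<dots> = Sg N B (Suc i)" by (simp only: Sg.simps)
    finally show ?thesis .
  qed
qed



abbreviation "XX N B i \<equiv> fst (Sg N B i)"
abbreviation "YY N B i \<equiv> fst (snd (Sg N B i))"
abbreviation "PP N B i \<equiv> snd (snd (Sg N B i))"

lemma probe_simps:
  "i mod 6 = 0 \<Longrightarrow> probe N (Suc i) s = (base N (tgt N (drift N (drift N (fst s)))), base N (tgt N (drift N (drift N (drift N (fst (snd s)))))))"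
  "i mod 6 = 3 \<Longrightarrow> probe N (Suc i) s = (base N (tgt N (drift N (drift N (drift N (fst s))))), base N (tgt N (drift N (drift N (fst (snd s))))))"
  "i mod 6 = 1 \<or> i mod 6 = 5 \<Longrightarrow> probe N (Suc i) s = (tgt N (drift N (fst s)) - fst (snd (snd s)), snd (snd (snd s)))"
  "i mod 6 = 2 \<or> i mod 6 = 4 \<Longrightarrow> probe N (Suc i) s = (fst (snd (snd s)), tgt N (drift N (fst (snd s))) - snd (snd (snd s)))"
  by (auto simp: probe_def)

lemma X_Suc: "XX N B (Suc i) = (if i mod 6 = 1 \<or> i mod 6 = 5 then cut N (drift N (XX N B i)) (B (Suc i)) else drift N (XX N B i))"
  by (simp add: step_def)
lemma Y_Suc: "YY N B (Suc i) = (if i mod 6 = 2 \<or> i mod 6 = 4 then cut N (drift N (YY N B i)) (B (Suc i)) else drift N (YY N B i))"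
  by (simp add: step_def)
lemma P_Suc: "PP N B (Suc i) = probe N (Suc i) (Sg N B i)"
  by (simp add: step_def)


lemma modsub: "i mod 6 = (k::nat) \<Longrightarrow> d \<le> k \<Longrightarrow> i = (i - d) + d \<and> (i - d) mod 6 = k - d"
proof -
  assume a: "i mod 6 = k" "d \<le> k"
  have e: "i = 6 * (i div 6) + k" using a(1) by (metis div_mult_mod_eq mult.commute)
  then have f: "i - d = (k - d) + 6 * (i div 6)" using a(2) by simp
  have "k < 6" using a(1) by auto
  then have "(i - d) mod 6 = k - d" unfolding f by simp
  then show ?thesis using e a(2) by simp
qed

lemma xbase_a: assumes a: "i = Suc j" "j mod 6 = 0" shows "fst (PP N B i) = base N (tgt N (drift N (XX N B i)))"
proof -
    have "fst (PP N B i) = fst (probe N (Suc j) (Sg N B j))" unfolding a(1) P_Suc ..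
    also have "\<dots> = base N (tgt N (drift N (drift N (XX N B j))))" unfolding probe_simps(1)[OF a(2)] by simp
    also have "drift N (XX N B j) = XX N B i" unfolding a(1) X_Suc using a(2) by simp
    finally show ?thesis .
qed

lemma xbase_b: assumes b: "i = Suc (Suc j)" "j mod 6 = 3" shows "fst (PP N B i) = base N (tgt N (drift N (XX N B i)))"
proof -
    have c: "(Suc j) mod 6 = 4" using b(2) by (simp add: mod_Suc)
    have "fst (PP N B i) = fst (probe N (Suc (Suc j)) (Sg N B (Suc j)))" unfolding b(1) P_Suc ..
    also have "\<dots> = fst (PP N B (Suc j))" unfolding probe_simps(4)[of "Suc j", OF disjI2[OF c]] by simp
    also have "\<dots> = fst (probe N (Suc j) (Sg N B j))" unfolding P_Suc ..
    also have "\<dots> = base N (tgt N (drift N (drift N (drift N (XX N B j)))))" unfolding probe_simps(2)[OF b(2)] by simp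
    also have "drift N (drift N (XX N B j)) = XX N B i" unfolding b(1) X_Suc[of N B "Suc j"] X_Suc[of N B j] using b(2) c by simp
    finally show ?thesis .
qed

lemma xbase: "i mod 6 = 1 \<or> i mod 6 = 5 \<Longrightarrow> fst (PP N B i) = base N (tgt N (drift N (XX N B i)))"
proof -
  assume h: "i mod 6 = 1 \<or> i mod 6 = 5"
  show ?thesis
  proof (cases "i mod 6 = 1")
    case True
    then have "i = Suc (i - 1)" "(i - 1) mod 6 = 0" using modsub[of i 1 1] by simp_all
    then show ?thesis by (rule xbase_a)
  next
    case False
    then have h5: "i mod 6 = 5" using h by simp
    then have "i = Suc (Suc (i - 2))" "(i - 2) mod 6 = 3" using modsub[of i 5 2] by simp_all
    then show ?thesis by (rule xbase_b)
  qed
qed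

lemma ybase_a: assumes a: "i = Suc j" "j mod 6 = 3" shows "snd (PP N B i) = base N (tgt N (drift N (YY N B i)))"
proof -
    have "snd (PP N B i) = snd (probe N (Suc j) (Sg N B j))" unfolding a(1) P_Suc ..
    also have "\<dots> = base N (tgt N (drift N (drift N (YY N B j))))" unfolding probe_simps(2)[OF a(2)] by simp
    also have "drift N (YY N B j) = YY N B i" unfolding a(1) Y_Suc using a(2) by simp
    finally show ?thesis .
qed

lemma ybase_b: assumes b: "i = Suc (Suc j)" "j mod 6 = 0" shows "snd (PP N B i) = base N (tgt N (drift N (YY N B i)))"
proof -
    have c: "(Suc j) mod 6 = 1" using b(2) by (simp add: mod_Suc)
    have "snd (PP N B i) = snd (probe N (Suc (Suc j)) (Sg N B (Suc j)))" unfolding b(1) P_Suc ..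
    also have "\<dots> = snd (PP N B (Suc j))" unfolding probe_simps(3)[of "Suc j", OF disjI1[OF c]] by simp
    also have "\<dots> = snd (probe N (Suc j) (Sg N B j))" unfolding P_Suc ..
    also have "\<dots> = base N (tgt N (drift N (drift N (drift N (YY N B j)))))" unfolding probe_simps(1)[OF b(2)] by simp
    also have "drift N (drift N (YY N B j)) = YY N B i" unfolding b(1) Y_Suc[of N B "Suc j"] Y_Suc[of N B j] using b(2) c by simp
    finally show ?thesis .
qed

lemma ybase: "i mod 6 = 2 \<or> i mod 6 = 4 \<Longrightarrow> snd (PP N B i) = base N (tgt N (drift N (YY N B i)))"
proof -
  assume h: "i mod 6 = 2 \<or> i mod 6 = 4"
  show ?thesis
  proof (cases "i mod 6 = 4")
    case True
    then have "i = Suc (i - 1)" "(i - 1) mod 6 = 3" using modsub[of i 4 1] by simp_all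
    then show ?thesis by (rule ybase_a)
  next
    case False
    then have h5: "i mod 6 = 2" using h by simp
    then have "i = Suc (Suc (i - 2))" "(i - 2) mod 6 = 0" using modsub[of i 2 2] by simp_all
    then show ?thesis by (rule ybase_b)
  qed
qed

lemma tgt_range: "N \<ge> 3 \<Longrightarrow> 4 \<le> tgt N I \<and> tgt N I \<le> 2*N - 2"
  by (simp add: tgt_def)

lemma base_range: "N \<ge> 3 \<Longrightarrow> 4 \<le> t \<Longrightarrow> t \<le> 2*N - 2 \<Longrightarrow>
   1 \<le> base N t \<and> base N t \<le> N \<and> 1 \<le> t - base N t \<and> t - base N t \<le> N"
  by (simp add: base_def)

lemma base_range1: "N \<ge> 3 \<Longrightarrow> 1 \<le> base N t \<and> base N t \<le> N"
  by (simp add: base_def)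

lemma P_range: assumes N: "N \<ge> 3" shows "1 \<le> i \<Longrightarrow> 1 \<le> fst (PP N B i) \<and> fst (PP N B i) \<le> N \<and> 1 \<le> snd (PP N B i) \<and> snd (PP N B i) \<le> N"
proof (induction i)
  case 0 then show ?case by simp
next
  case (Suc i)
  have six: "i mod 6 = 0 \<or> i mod 6 = 3 \<or> i mod 6 = 1 \<or> i mod 6 = 5 \<or> i mod 6 = 2 \<or> i mod 6 = 4" by linarith
  then consider "i mod 6 = 0 \<or> i mod 6 = 3" | "i mod 6 = 1 \<or> i mod 6 = 5" | "i mod 6 = 2 \<or> i mod 6 = 4" by blast
  then show ?case
  proof cases
    case 1
    then show ?thesis
    proof
      assume h: "i mod 6 = 0"
      show ?thesis unfolding P_Suc probe_simps(1)[OF h] using base_range1[OF N] by simp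
    next
      assume h: "i mod 6 = 3"
      show ?thesis unfolding P_Suc probe_simps(2)[OF h] using base_range1[OF N] by simp
    qed
  next
    case 2
    then have i1: "1 \<le> i" by auto
    have t: "4 \<le> tgt N (drift N (XX N B i)) \<and> tgt N (drift N (XX N B i)) \<le> 2*N - 2" using tgt_range[OF N] .
    show ?thesis unfolding P_Suc probe_simps(3)[OF 2] using Suc.IH[OF i1] xbase[OF 2] base_range[OF N] t by auto
  next
    case 3
    then have i1: "1 \<le> i" by auto
    have t: "4 \<le> tgt N (drift N (YY N B i)) \<and> tgt N (drift N (YY N B i)) \<le> 2*N - 2" using tgt_range[OF N] .
    show ?thesis unfolding P_Suc probe_simps(4)[OF 3] using Suc.IH[OF i1] ybase[OF 3] base_range[OF N] t by auto
  qed
qed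

lemma cut_bounds: "fst I \<le> fst (cut N I b) \<and> snd (cut N I b) \<le> snd I"
  by (simp add: cut_def)

lemma box_range: "N \<ge> 1 \<Longrightarrow> 1 \<le> fst (XX N B i) \<and> snd (XX N B i) \<le> N \<and> 1 \<le> fst (YY N B i) \<and> snd (YY N B i) \<le> N"
proof (cases i)
  case 0 then show ?thesis by (simp add: S0_def) 
next
  case (Suc j)
  have d: "1 \<le> fst (drift N I) \<and> snd (drift N I) \<le> N" for I by (simp add: drift_def)
  have x: "XX N B (Suc j) = cut N (drift N (XX N B j)) (B (Suc j)) \<or> XX N B (Suc j) = drift N (XX N B j)"
    unfolding X_Suc by simp
  have y: "YY N B (Suc j) = cut N (drift N (YY N B j)) (B (Suc j)) \<or> YY N B (Suc j) = drift N (YY N B j)"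
    unfolding Y_Suc by simp
  have c1: "fst (drift N (XX N B j)) \<le> fst (cut N (drift N (XX N B j)) (B (Suc j))) \<and> snd (cut N (drift N (XX N B j)) (B (Suc j))) \<le> snd (drift N (XX N B j))" by (rule cut_bounds)
  have c2: "fst (drift N (YY N B j)) \<le> fst (cut N (drift N (YY N B j)) (B (Suc j))) \<and> snd (cut N (drift N (YY N B j)) (B (Suc j))) \<le> snd (drift N (YY N B j))" by (rule cut_bounds)
  have d1: "1 \<le> fst (drift N (XX N B j)) \<and> snd (drift N (XX N B j)) \<le> N" by (rule d)
  have d2: "1 \<le> fst (drift N (YY N B j)) \<and> snd (drift N (YY N B j)) \<le> N" by (rule d)
  from x y c1 c2 d1 d2 show ?thesis unfolding Suc by (elim disjE conjE; simp only:; intro conjI; linarith)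
qed


definition inbox :: "int \<times> int \<Rightarrow> int \<Rightarrow> bool" where
  "inbox I x \<longleftrightarrow> fst I \<le> x \<and> x \<le> snd I"

lemma drift_mem: "inbox I x' \<Longrightarrow> \<bar>x - x'\<bar> \<le> 1 \<Longrightarrow> 1 \<le> x \<Longrightarrow> x \<le> N \<Longrightarrow> inbox (drift N I) x"
  by (auto simp: inbox_def drift_def)

lemma cut_mem: "inbox I x \<Longrightarrow> (bb = (tgt N I \<le> N+1) \<longrightarrow> hcut N (tgt N I) \<le> x) \<and> (bb \<noteq> (tgt N I \<le> N+1) \<longrightarrow> x \<le> hcut N (tgt N I))
   \<Longrightarrow> inbox (cut N I bb) x"
  by (auto simp: cut_def inbox_def)

lemma toV_id: "N = int n \<Longrightarrow> 1 \<le> a \<Longrightarrow> a \<le> N \<Longrightarrow> 1 \<le> b \<Longrightarrow> b \<le> N \<Longrightarrow>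
   toV N (a,b) \<in> grid_V n \<and> int (fst (toV N (a,b))) = a \<and> int (snd (toV N (a,b))) = b"
  by (auto simp: toV_def grid_V_def)

lemma gV: "p \<in> grid_V n \<Longrightarrow> 1 \<le> int (fst p) \<and> int (fst p) \<le> int n \<and> 1 \<le> int (snd p) \<and> int (snd p) \<le> int n"
  by (auto simp: grid_V_def)

lemma xstep:
  assumes n3: "n \<ge> 3" and N: "N = int n" and cP: "\<forall>i\<ge>1. c i = toV N (PP N B i)"
    and i1: "1 \<le> i" and r: "i mod 6 = 1 \<or> i mod 6 = 5"
    and mv: "mt i \<in> grid_V n" "mt (Suc i) \<in> grid_V n" "L1 (mt (Suc i)) (mt i) \<le> 1"
    and ans: "(gdist (grid_E n) (c (Suc i)) (mt (Suc i)) \<le> gdist (grid_E n) (c i) (mt i)) = B (Suc i)"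
    and box: "inbox (XX N B i) (int (fst (mt i)))"
  shows "inbox (XX N B (Suc i)) (int (fst (mt (Suc i))))"
proof -
  have N3: "N \<ge> 3" using n3 N by simp
  define D where "D = drift N (XX N B i)"
  define t where "t = tgt N D"
  define q where "q = snd (PP N B i)"
  have t4: "4 \<le> t" "t \<le> 2*N - 2" using tgt_range[OF N3] unfolding t_def by auto
  have Pi: "PP N B i = (base N t, q)" using xbase[OF r, of N B] unfolding q_def t_def D_def by (metis prod.collapse)
  have Pi1: "PP N B (Suc i) = (t - base N t, q)" unfolding P_Suc probe_simps(3)[OF r] Pi t_def D_def by simp
  have rng: "1 \<le> q \<and> q \<le> N" using P_range[OF N3 i1, of B] Pi by simp
  have br: "1 \<le> base N t \<and> base N t \<le> N \<and> 1 \<le> t - base N t \<and> t - base N t \<le> N" using base_range[OF N3 t4] .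
  have ci: "c i \<in> grid_V n \<and> int (fst (c i)) = base N t \<and> int (snd (c i)) = q"
    using cP i1 Pi toV_id[OF N] br rng by auto
  have ci1: "c (Suc i) \<in> grid_V n \<and> int (fst (c (Suc i))) = t - base N t \<and> int (snd (c (Suc i))) = q"
    using cP Pi1 toV_id[OF N] br rng by auto
  define x where "x = int (fst (mt (Suc i)))"
  define y where "y = int (snd (mt (Suc i)))"
  define x' where "x' = int (fst (mt i))"
  define y' where "y' = int (snd (mt i))"
  have g1: "int (gdist (grid_E n) (c (Suc i)) (mt (Suc i))) = \<bar>x - (t - base N t)\<bar> + \<bar>y - q\<bar>"
    using gdist_grid[of "c (Suc i)" n "mt (Suc i)"] ci1 mv(2) unfolding L1_def x_def y_def by (simp add: abs_minus_commute)
  have g2: "int (gdist (grid_E n) (c i) (mt i)) = \<bar>x' - base N t\<bar> + \<bar>y' - q\<bar>"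
    using gdist_grid[of "c i" n "mt i"] ci mv(1) unfolding L1_def x'_def y'_def by (simp add: abs_minus_commute)
  have bb: "B (Suc i) = (\<bar>x - (t - base N t)\<bar> + \<bar>y - q\<bar> \<le> \<bar>x' - base N t\<bar> + \<bar>y' - q\<bar>)"
    using ans g1 g2 by (metis of_nat_le_iff)
  have d1: "\<bar>x - x'\<bar> + \<bar>y - y'\<bar> \<le> 1" using mv(3) unfolding L1_def x_def y_def x'_def y'_def .
  have th: "(B (Suc i) = (t \<le> N + 1) \<longrightarrow> hcut N t \<le> x) \<and> (B (Suc i) \<noteq> (t \<le> N + 1) \<longrightarrow> x \<le> hcut N t)"
    using thr_cut[OF N3 t4 d1 bb] .
  have dm: "inbox D x" unfolding D_def
    using drift_mem[OF box[folded x'_def]] d1 gV[OF mv(2)] N unfolding x_def by fastforce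
  have X1: "XX N B (Suc i) = cut N D (B (Suc i))" unfolding X_Suc D_def using r by simp
  show ?thesis unfolding X1 x_def[symmetric] using cut_mem[OF dm] th unfolding t_def by blast
qed

lemma ystep:
  assumes n3: "n \<ge> 3" and N: "N = int n" and cP: "\<forall>i\<ge>1. c i = toV N (PP N B i)"
    and i1: "1 \<le> i" and r: "i mod 6 = 2 \<or> i mod 6 = 4"
    and mv: "mt i \<in> grid_V n" "mt (Suc i) \<in> grid_V n" "L1 (mt (Suc i)) (mt i) \<le> 1"
    and ans: "(gdist (grid_E n) (c (Suc i)) (mt (Suc i)) \<le> gdist (grid_E n) (c i) (mt i)) = B (Suc i)"
    and box: "inbox (YY N B i) (int (snd (mt i)))"
  shows "inbox (YY N B (Suc i)) (int (snd (mt (Suc i))))"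
proof -
  have N3: "N \<ge> 3" using n3 N by simp
  define D where "D = drift N (YY N B i)"
  define t where "t = tgt N D"
  define q where "q = fst (PP N B i)"
  have t4: "4 \<le> t" "t \<le> 2*N - 2" using tgt_range[OF N3] unfolding t_def by auto
  have Pi: "PP N B i = (q, base N t)" using ybase[OF r, of N B] unfolding q_def t_def D_def by (metis prod.collapse)
  have Pi1: "PP N B (Suc i) = (q, t - base N t)" unfolding P_Suc probe_simps(4)[OF r] Pi t_def D_def by simp
  have rng: "1 \<le> q \<and> q \<le> N" using P_range[OF N3 i1, of B] Pi by simp
  have br: "1 \<le> base N t \<and> base N t \<le> N \<and> 1 \<le> t - base N t \<and> t - base N t \<le> N" using base_range[OF N3 t4] .
  have ci: "c i \<in> grid_V n \<and> int (fst (c i)) = q \<and> int (snd (c i)) = base N t"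
    using cP i1 Pi toV_id[OF N] br rng by auto
  have ci1: "c (Suc i) \<in> grid_V n \<and> int (fst (c (Suc i))) = q \<and> int (snd (c (Suc i))) = t - base N t"
    using cP Pi1 toV_id[OF N] br rng by auto
  define x where "x = int (fst (mt (Suc i)))"
  define y where "y = int (snd (mt (Suc i)))"
  define x' where "x' = int (fst (mt i))"
  define y' where "y' = int (snd (mt i))"
  have g1: "int (gdist (grid_E n) (c (Suc i)) (mt (Suc i))) = \<bar>y - (t - base N t)\<bar> + \<bar>x - q\<bar>"
    using gdist_grid[of "c (Suc i)" n "mt (Suc i)"] ci1 mv(2) unfolding L1_def x_def y_def by (simp add: abs_minus_commute)
  have g2: "int (gdist (grid_E n) (c i) (mt i)) = \<bar>y' - base N t\<bar> + \<bar>x' - q\<bar>"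
    using gdist_grid[of "c i" n "mt i"] ci mv(1) unfolding L1_def x'_def y'_def by (simp add: abs_minus_commute)
  have bb: "B (Suc i) = (\<bar>y - (t - base N t)\<bar> + \<bar>x - q\<bar> \<le> \<bar>y' - base N t\<bar> + \<bar>x' - q\<bar>)"
    using ans g1 g2 by (metis of_nat_le_iff)
  have d1: "\<bar>y - y'\<bar> + \<bar>x - x'\<bar> \<le> 1" using mv(3) unfolding L1_def x_def y_def x'_def y'_def by simp
  have th: "(B (Suc i) = (t \<le> N + 1) \<longrightarrow> hcut N t \<le> y) \<and> (B (Suc i) \<noteq> (t \<le> N + 1) \<longrightarrow> y \<le> hcut N t)"
    using thr_cut[OF N3 t4 d1 bb] .
  have dm: "inbox D y" unfolding D_def
    using drift_mem[OF box[folded y'_def]] d1 gV[OF mv(2)] N unfolding y_def by fastforce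
  have Y1: "YY N B (Suc i) = cut N D (B (Suc i))" unfolding Y_Suc D_def using r by simp
  show ?thesis unfolding Y1 y_def[symmetric] using cut_mem[OF dm] th unfolding t_def by blast
qed

definition consis :: "nat \<Rightarrow> (nat \<Rightarrow> nat \<times> nat) \<Rightarrow> (nat \<Rightarrow> bool) \<Rightarrow> (nat \<Rightarrow> nat \<times> nat) \<Rightarrow> nat \<Rightarrow> bool" where
  "consis n c B mt i \<longleftrightarrow> (\<forall>j. 1 \<le> j \<and> j \<le> i \<longrightarrow> mt j \<in> grid_V n)
     \<and> (\<forall>j. 2 \<le> j \<and> j \<le> i \<longrightarrow> mt j \<in> cnbhd (grid_E n) (mt (j - 1)))
     \<and> (\<forall>j. 2 \<le> j \<and> j \<le> i \<longrightarrow> ((gdist (grid_E n) (c j) (mt j) \<le> gdist (grid_E n) (c (j - 1)) (mt (j - 1))) = B j))"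

lemma cnbhd_L1: "v \<in> cnbhd (grid_E n) u \<Longrightarrow> L1 v u \<le> 1"
  by (auto simp: cnbhd_def grid_E_def L1_def abs_minus_commute)

lemma invariant:
  assumes n3: "n \<ge> 3" and N: "N = int n" and cP: "\<forall>i\<ge>1. c i = toV N (PP N B i)"
  shows "1 \<le> i \<Longrightarrow> consis n c B mt i \<Longrightarrow> inbox (XX N B i) (int (fst (mt i))) \<and> inbox (YY N B i) (int (snd (mt i)))"
proof (induction i)
  case 0 then show ?case by simp
next
  case (Suc i)
  have mv2: "mt (Suc i) \<in> grid_V n" using Suc.prems(2) unfolding consis_def by auto
  show ?case
  proof (cases "i = 0")
    case True
    have "XX N B (Suc i) = (1, N) \<and> YY N B (Suc i) = (1, N)" unfolding True X_Suc Y_Suc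
      using n3 N by (simp add: drift_def S0_def)
    then show ?thesis using gV[OF mv2] N by (simp add: inbox_def)
  next
    case False
    then have i1: "1 \<le> i" by simp
    have cs: "consis n c B mt i" using Suc.prems(2) unfolding consis_def by auto
    have IH: "inbox (XX N B i) (int (fst (mt i))) \<and> inbox (YY N B i) (int (snd (mt i)))" using Suc.IH[OF i1 cs] .
    have mv1: "mt i \<in> grid_V n" using Suc.prems(2) i1 unfolding consis_def by auto
    have two: "2 \<le> Suc i \<and> Suc i \<le> Suc i" using i1 by simp
    have nb: "mt (Suc i) \<in> cnbhd (grid_E n) (mt i)" using Suc.prems(2) two unfolding consis_def
      by (metis diff_Suc_1)
    have l1: "L1 (mt (Suc i)) (mt i) \<le> 1" using cnbhd_L1[OF nb] .
    have ans: "(gdist (grid_E n) (c (Suc i)) (mt (Suc i)) \<le> gdist (grid_E n) (c i) (mt i)) = B (Suc i)"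
      using Suc.prems(2) two unfolding consis_def by (metis diff_Suc_1)
    have dx: "\<bar>int (fst (mt (Suc i))) - int (fst (mt i))\<bar> \<le> 1" "\<bar>int (snd (mt (Suc i))) - int (snd (mt i))\<bar> \<le> 1"
      using l1 unfolding L1_def by auto
    have xd: "inbox (drift N (XX N B i)) (int (fst (mt (Suc i))))"
      using drift_mem IH dx(1) gV[OF mv2] N by blast
    have yd: "inbox (drift N (YY N B i)) (int (snd (mt (Suc i))))"
      using drift_mem IH dx(2) gV[OF mv2] N by blast
    have X: "inbox (XX N B (Suc i)) (int (fst (mt (Suc i))))"
    proof (cases "i mod 6 = 1 \<or> i mod 6 = 5")
      case True
      show ?thesis using xstep[OF n3 N cP i1 True mv1 mv2 l1 ans] IH by blast
    next
      case False
      then show ?thesis unfolding X_Suc using xd by simp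
    qed
    have Y: "inbox (YY N B (Suc i)) (int (snd (mt (Suc i))))"
    proof (cases "i mod 6 = 2 \<or> i mod 6 = 4")
      case True
      show ?thesis using ystep[OF n3 N cP i1 True mv1 mv2 l1 ans] IH by blast
    next
      case False
      then show ?thesis unfolding Y_Suc using yd by simp
    qed
    show ?thesis using X Y by blast
  qed
qed


abbreviation "wid I \<equiv> snd I - fst I"

lemma drift_wid: "wid (drift N I) \<le> wid I + 2"
  by (simp add: drift_def)

lemma cut_drift_wid: "wid (cut N (drift N I) b) \<le> (wid I + 3) div 2"
proof -
  obtain A B where AB: "drift N I = (A, B)" by (cases "drift N I")
  have "1 \<le> A" "B \<le> N" "B - A \<le> wid I + 2" using AB by (auto simp: drift_def)
  then have "wid (cut N (A,B) b) \<le> (B - A + 1) div 2" "(B - A + 1) div 2 \<le> (wid I + 3) div 2"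
    using cut_width[of A B N b] by (simp_all add: zdiv_mono1)
  then show ?thesis using AB by simp
qed

lemma wX_step: "wid (XX N B (Suc i)) \<le> (if i mod 6 = 1 \<or> i mod 6 = 5 then (wid (XX N B i) + 3) div 2 else wid (XX N B i) + 2)"
  unfolding X_Suc using cut_drift_wid drift_wid by simp
lemma wY_step: "wid (YY N B (Suc i)) \<le> (if i mod 6 = 2 \<or> i mod 6 = 4 then (wid (YY N B i) + 3) div 2 else wid (YY N B i) + 2)"
  unfolding Y_Suc using cut_drift_wid drift_wid by simp

lemma linx: fixes a0 a1 a2 a3 a4 a5 a6 :: int
  shows "a1 \<le> a0 + 2 \<Longrightarrow> 2*a2 \<le> a1 + 3 \<Longrightarrow> a3 \<le> a2+2 \<Longrightarrow> a4 \<le> a3 + 2 \<Longrightarrow> a5 \<le> a4 + 2 \<Longrightarrow> 2*a6 \<le> a5+3 \<Longrightarrow> 4*a6 \<le> a0 + 23"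
  by linarith
lemma liny: fixes a0 a1 a2 a3 a4 a5 a6 :: int
  shows "a1 \<le> a0 + 2 \<Longrightarrow> a2 \<le> a1 + 2 \<Longrightarrow> 2*a3 \<le> a2+3 \<Longrightarrow> a4 \<le> a3 + 2 \<Longrightarrow> 2*a5 \<le> a4 + 3 \<Longrightarrow> a6 \<le> a5+2 \<Longrightarrow> 4*a6 \<le> a0 + 25"
  by linarith
lemma linf: fixes P w N c :: int
  shows "0 \<le> c \<Longrightarrow> 0 < P \<Longrightarrow> P * (3*w - c) \<le> 3*(N - 1) - c \<Longrightarrow> 3*N < P \<Longrightarrow> 3*w - c < 1"
proof -
  assume c: "0 \<le> c" and a: "0 < P" "P * (3*w - c) \<le> 3*(N - 1) - c" "3*N < P"
  show "3*w - c < 1"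
  proof (rule ccontr)
    assume "\<not> 3*w - c < 1"
    then have h: "P \<le> P * (3*w - c)" using a(1) by simp
    have "P \<le> 3*(N - 1) - c" using h a(2) by (rule order_trans)
    then show False using a(3) c by arith
  qed
qed

lemma cycle:
  "4 * wid (XX N B (6*k+6)) \<le> wid (XX N B (6*k)) + 23 \<and> 4 * wid (YY N B (6*k+6)) \<le> wid (YY N B (6*k)) + 25"
proof -
  have m: "(6*k + r) mod 6 = r" if "r < 6" for r using that by simp
  have x1: "wid (XX N B (Suc (6*k))) \<le> wid (XX N B (6*k)) + 2" using wX_step[of N B "6*k"] by simp
  have x2: "wid (XX N B (Suc (6*k+1))) \<le> (wid (XX N B (6*k+1)) + 3) div 2" using wX_step[of N B "6*k+1"] m[of 1] by simp
  have x3: "wid (XX N B (Suc (6*k+2))) \<le> wid (XX N B (6*k+2)) + 2" using wX_step[of N B "6*k+2"] m[of 2] by simp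
  have x4: "wid (XX N B (Suc (6*k+3))) \<le> wid (XX N B (6*k+3)) + 2" using wX_step[of N B "6*k+3"] m[of 3] by simp
  have x5: "wid (XX N B (Suc (6*k+4))) \<le> wid (XX N B (6*k+4)) + 2" using wX_step[of N B "6*k+4"] m[of 4] by simp
  have x6: "wid (XX N B (Suc (6*k+5))) \<le> (wid (XX N B (6*k+5)) + 3) div 2" using wX_step[of N B "6*k+5"] m[of 5] by simp
  have y1: "wid (YY N B (Suc (6*k))) \<le> wid (YY N B (6*k)) + 2" using wY_step[of N B "6*k"] by simp
  have y2: "wid (YY N B (Suc (6*k+1))) \<le> wid (YY N B (6*k+1)) + 2" using wY_step[of N B "6*k+1"] m[of 1] by simp
  have y3: "wid (YY N B (Suc (6*k+2))) \<le> (wid (YY N B (6*k+2)) + 3) div 2" using wY_step[of N B "6*k+2"] m[of 2] by simp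
  have y4: "wid (YY N B (Suc (6*k+3))) \<le> wid (YY N B (6*k+3)) + 2" using wY_step[of N B "6*k+3"] m[of 3] by simp
  have y5: "wid (YY N B (Suc (6*k+4))) \<le> (wid (YY N B (6*k+4)) + 3) div 2" using wY_step[of N B "6*k+4"] m[of 4] by simp
  have y6: "wid (YY N B (Suc (6*k+5))) \<le> wid (YY N B (6*k+5)) + 2" using wY_step[of N B "6*k+5"] m[of 5] by simp
  have e: "Suc (6*k) = 6*k+1" "Suc (6*k+1) = 6*k+2" "Suc (6*k+2) = 6*k+3" "Suc (6*k+3) = 6*k+4"
    "Suc (6*k+4) = 6*k+5" "Suc (6*k+5) = 6*k+6" by simp_all
  note xs = x1 x2 x3 x4 x5 x6 y1 y2 y3 y4 y5 y6
  note xs' = xs[unfolded e]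
  have dv: "a \<le> b div 2 \<Longrightarrow> 2 * a \<le> b" for a b :: int by linarith
  have A: "4 * wid (XX N B (6*k+6)) \<le> wid (XX N B (6*k)) + 23"
    by (rule linx[OF xs'(1) dv[OF xs'(2)] xs'(3,4,5) dv[OF xs'(6)]])
  have Bq: "4 * wid (YY N B (6*k+6)) \<le> wid (YY N B (6*k)) + 25"
    by (rule liny[OF xs'(7,8) dv[OF xs'(9)] xs'(10) dv[OF xs'(11)] xs'(12)])
  show ?thesis using A Bq by blast
qed

lemma converge:
  "4^k * (3 * wid (XX N B (6*k)) - 23) \<le> 3 * wid (XX N B 0) - 23 \<and>
   4^k * (3 * wid (YY N B (6*k)) - 25) \<le> 3 * wid (YY N B 0) - 25"
proof (induction k)
  case 0 then show ?case by simp
next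
  case (Suc k)
  have c: "4 * (3 * wid (XX N B (6*(Suc k))) - 23) \<le> 3 * wid (XX N B (6*k)) - 23"
          "4 * (3 * wid (YY N B (6*(Suc k))) - 25) \<le> 3 * wid (YY N B (6*k)) - 25"
    using cycle[of N B k] by (simp_all add: algebra_simps)
  have p: "(0::int) < 4^k" by simp
  have "4^Suc k * (3 * wid (XX N B (6*(Suc k))) - 23) = 4^k * (4 * (3 * wid (XX N B (6*(Suc k))) - 23))" by simp
  also have "\<dots> \<le> 4^k * (3 * wid (XX N B (6*k)) - 23)" using mult_left_mono[OF c(1)] p by simp
  finally have a: "4^Suc k * (3 * wid (XX N B (6*(Suc k))) - 23) \<le> 3 * wid (XX N B 0) - 23" using Suc.IH by linarith
  have "4^Suc k * (3 * wid (YY N B (6*(Suc k))) - 25) = 4^k * (4 * (3 * wid (YY N B (6*(Suc k))) - 25))" by simp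
  also have "\<dots> \<le> 4^k * (3 * wid (YY N B (6*k)) - 25)" using mult_left_mono[OF c(2)] p by simp
  finally have b: "4^Suc k * (3 * wid (YY N B (6*(Suc k))) - 25) \<le> 3 * wid (YY N B 0) - 25" using Suc.IH by linarith
  show ?case using a b by blast
qed

lemma final_width:
  assumes N: "N \<ge> 1" and K: "3 * N < 4^K"
  shows "wid (XX N B (6*K)) \<le> 8 \<and> wid (YY N B (6*K)) \<le> 8"
proof -
  have w0: "wid (XX N B 0) = N - 1" "wid (YY N B 0) = N - 1" by (simp_all add: S0_def)
  have cv: "4^K * (3 * wid (XX N B (6*K)) - 23) \<le> 3 * (N - 1) - 23" "4^K * (3 * wid (YY N B (6*K)) - 25) \<le> 3 * (N - 1) - 25"
    using converge[of K N B] unfolding w0 by blast+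
  have p: "(0::int) < 4^K" by simp
  have "3 * wid (XX N B (6*K)) - 23 < 1" "3 * wid (YY N B (6*K)) - 25 < 1"
    using linf[OF _ p cv(1) K] linf[OF _ p cv(2) K] by auto
  moreover have "\<And>a::int. 3 * a - 23 < 1 \<Longrightarrow> a \<le> 8" "\<And>a::int. 3 * a - 25 < 1 \<Longrightarrow> a \<le> 8" by linarith+
  ultimately show ?thesis by blast
qed


lemma finite_grid: "finite (grid_V n)" by (simp add: grid_V_def)

lemma absbound: fixes a b x :: int shows "a \<le> x \<Longrightarrow> x \<le> b \<Longrightarrow> b - a \<le> 8 \<Longrightarrow> \<bar>(a + b) div 2 - x\<bar> \<le> 4"
  by presburger

lemma grad_box:
  fixes n :: nat and xl xh yl yh :: int
  assumes M: "M \<subseteq> grid_V n" "m0 \<in> M"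
    and box: "\<forall>p\<in>M. xl \<le> int (fst p) \<and> int (fst p) \<le> xh \<and> yl \<le> int (snd p) \<and> int (snd p) \<le> yh"
    and r: "1 \<le> xl" "xh \<le> int n" "1 \<le> yl" "yh \<le> int n" "xh - xl \<le> 8" "yh - yl \<le> 8"
  shows "grad (grid_V n) (grid_E n) M \<le> 8"
proof -
  have le: "xl \<le> xh" "yl \<le> yh" using box M(2) by force+
  define cx where "cx = (xl + xh) div 2"
  define cy where "cy = (yl + yh) div 2"
  have cxr: "xl \<le> cx" "cx \<le> xh" "cy \<le> yh" "yl \<le> cy" using le unfolding cx_def cy_def by linarith+
  define u where "u = (nat cx, nat cy)"
  have uV: "u \<in> grid_V n" using cxr r unfolding u_def grid_V_def by auto
  have fin: "finite M" using M(1) finite_grid finite_subset by blast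
  have d: "gdist (grid_E n) u p \<le> 8" if p: "p \<in> M" for p
  proof -
    have pV: "p \<in> grid_V n" using p M(1) by blast
    have b: "xl \<le> int (fst p) \<and> int (fst p) \<le> xh \<and> yl \<le> int (snd p) \<and> int (snd p) \<le> yh" using box p by blast
    have "int (gdist (grid_E n) u p) = \<bar>cx - int (fst p)\<bar> + \<bar>cy - int (snd p)\<bar>"
      using gdist_grid[OF uV pV] cxr r unfolding L1_def u_def by simp
    also have "\<dots> \<le> 8" using absbound[of xl "int (fst p)" xh] absbound[of yl "int (snd p)" yh] b r(5,6) unfolding cx_def cy_def by linarith
    finally show ?thesis by simp
  qed
  have mx: "Max ((\<lambda>x. gdist (grid_E n) u x) ` M) \<le> 8"
    using d fin M(2) by (subst Max_le_iff) auto
  have "grad (grid_V n) (grid_E n) M \<le> Max ((\<lambda>x. gdist (grid_E n) u x) ` M)"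
    unfolding grad_def using uV finite_grid by (intro Min_le) auto
  then show ?thesis using mx by linarith
qed


definition c1s :: "int \<Rightarrow> nat \<times> nat" where "c1s N = toV N (probe N 1 (S0 N))"

lemma toV_V: "N = int n \<Longrightarrow> n \<ge> 1 \<Longrightarrow> toV N p \<in> grid_V n"
  by (auto simp: toV_def grid_V_def)

lemma cP_lemma:
  assumes fo: "follows (grid_E n) (c1s N) (fstrat N []) (fstrat N) m c"
  shows "\<forall>i\<ge>1. c i = toV N (PP N (answer (grid_E n) m c) i)"
proof (intro allI impI)
  fix i :: nat assume i1: "1 \<le> i"
  define B where "B = answer (grid_E n) m c"
  have f: "c 1 = c1s N" "c 2 = fstrat N []" "\<forall>i\<ge>2. c (Suc i) = fstrat N (map B [2..<Suc i])"
    using fo unfolding follows_def B_def by auto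
  show "c i = toV N (PP N (answer (grid_E n) m c) i)"
  proof (cases "i = 1")
    case True
    then show ?thesis using f(1) unfolding c1s_def by (simp add: step_def)
  next
    case False
    then obtain j where j: "i = Suc j" "1 \<le> j" using i1 by (cases i) auto
    have "c (Suc j) = fstrat N (map B [2..<Suc j])"
    proof (cases "j = 1")
      case True then show ?thesis using f(2) by (simp add: numeral_2_eq_2)
    next
      case False then show ?thesis using f(3) j(2) by simp
    qed
    also have "\<dots> = toV N (probe N (Suc j) (Sg N B j))"
    proof -
      have "length (map B [2..<Suc j]) + 2 = Suc j" using j(2) by auto
      then show ?thesis unfolding fstrat_def stl_Sg[OF j(2)] by (simp only:)
    qed
    also have "\<dots> = toV N (PP N B (Suc j))" unfolding P_Suc ..
    finally show ?thesis unfolding j(1) B_def .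
  qed
qed

lemma possible_box:
  assumes n3: "n \<ge> 3" and N: "N = int n"
    and fo: "follows (grid_E n) (c1s N) (fstrat N []) (fstrat N) m c"
    and i1: "1 \<le> i"
    and u: "u \<in> possible_set (grid_V n) (grid_E n) m c i"
  shows "inbox (XX N (answer (grid_E n) m c) i) (int (fst u)) \<and> inbox (YY N (answer (grid_E n) m c) i) (int (snd u))"
proof -
  obtain mt where mt: "mt i = u" "\<forall>j. 1 \<le> j \<and> j \<le> i \<longrightarrow> mt j \<in> grid_V n"
      "\<forall>j. 2 \<le> j \<and> j \<le> i \<longrightarrow> mt j \<in> cnbhd (grid_E n) (mt (j - 1))"
      "\<forall>j. 2 \<le> j \<and> j \<le> i \<longrightarrow> ((gdist (grid_E n) (c j) (mt j) \<le> gdist (grid_E n) (c (j - 1)) (mt (j - 1))) = answer (grid_E n) m c j)"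
    using u unfolding possible_set_def by blast
  have cs: "consis n c (answer (grid_E n) m c) mt i" unfolding consis_def using mt(2-4) by blast
  show ?thesis using invariant[OF n3 N cP_lemma[OF fo] i1 cs] mt(1) by simp
qed

lemma m_possible:
  assumes g: "is_game (grid_V n) (grid_E n) m c" and i1: "1 \<le> i"
  shows "m i \<in> possible_set (grid_V n) (grid_E n) m c i"
  using g i1 unfolding possible_set_def is_game_def answer_def by auto


lemma K_bound:
  assumes n2: "n \<ge> 2"
  shows "3 * int n < 4 ^ (nat \<lceil>log 2 (real n)\<rceil> + 2) \<and>
         real (6 * (nat \<lceil>log 2 (real n)\<rceil> + 2)) \<le> (24 / ln 2) * ln (real n)"
proof -
  define L where "L = log 2 (real n)"
  define K where "K = nat \<lceil>L\<rceil>"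
  have L0: "0 \<le> L" unfolding L_def using n2 by simp
  have KL: "L \<le> real K" "real K \<le> L + 1" unfolding K_def using L0 by linarith+
  have "real n = 2 powr L" unfolding L_def using n2 by simp
  also have "\<dots> \<le> 2 powr (real K)" using KL(1) by (intro powr_mono) auto
  also have "\<dots> = 2 ^ K" by (simp add: powr_realpow)
  finally have "real n \<le> 2 ^ K" .
  then have nK: "n \<le> 2 ^ K" by (metis of_nat_le_iff of_nat_numeral of_nat_power)
  have "(2::nat) ^ K \<le> 4 ^ K" by (intro power_mono) auto
  then have "3 * n < 4 ^ (K + 2)" using nK n2 by (simp add: power_add)
  then have p1: "3 * int n < 4 ^ (K + 2)" by (metis of_nat_less_iff of_nat_mult of_nat_numeral of_nat_power)
  have l2: "0 < ln (2::real)" by simp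
  have ln2n: "ln 2 \<le> ln (real n)" using n2 by simp
  have Ld: "L = ln (real n) / ln 2" unfolding L_def log_def ..
  have "real (6 * (K + 2)) = 6 * real K + 12" by simp
  also have "\<dots> \<le> 6 * L + 18" using KL(2) by linarith
  also have "\<dots> = 6 * (ln (real n) / ln 2) + 18 * (ln 2 / ln 2)" using l2 Ld by simp
  also have "\<dots> \<le> 6 * (ln (real n) / ln 2) + 18 * (ln (real n) / ln 2)"
    using ln2n l2 by (intro add_left_mono mult_left_mono divide_right_mono) auto
  also have "\<dots> = (24 / ln 2) * ln (real n)" by (simp add: field_simps)
  finally show ?thesis using p1 unfolding K_def L_def by simp
qed

lemma poss_V: "u \<in> possible_set (grid_V n) (grid_E n) m c i \<Longrightarrow> 1 \<le> i \<Longrightarrow> u \<in> grid_V n"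
  unfolding possible_set_def by auto

theorem theorem2:
  shows "\<exists>C::real. C > 0 \<and>
    (\<forall>n::nat. n \<ge> 2 \<longrightarrow> can_localize (grid_V n) (grid_E n) 8 (C * ln (real n)))"
proof (intro exI conjI allI impI)
  show "(0::real) < 24 / ln 2" by simp
  fix n :: nat assume n2: "2 \<le> n"
  define N where "N = int n"
  define C :: real where "C = 24 / ln 2"
  have Cln: "24 \<le> C * ln (real n)"
  proof -
    have "C * ln 2 = 24" unfolding C_def by simp
    moreover have "C * ln 2 \<le> C * ln (real n)" using n2 unfolding C_def by (intro mult_left_mono) auto
    ultimately show ?thesis by linarith
  qed
  show "can_localize (grid_V n) (grid_E n) 8 ((24 / ln 2) * ln (real n))"
    unfolding can_localize_def C_def[symmetric]
  proof (rule exI[of _ "c1s N"], rule exI[of _ "fstrat N []"], rule exI[of _ "fstrat N"], intro conjI allI impI)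
    show "is_strategy (grid_V n) (c1s N) (fstrat N []) (fstrat N)"
      unfolding is_strategy_def c1s_def fstrat_def using toV_V[OF N_def] n2 by auto
    fix m c assume gf: "is_game (grid_V n) (grid_E n) m c \<and> follows (grid_E n) (c1s N) (fstrat N []) (fstrat N) m c"
    then have g: "is_game (grid_V n) (grid_E n) m c" and fo: "follows (grid_E n) (c1s N) (fstrat N []) (fstrat N) m c" by auto
    show "\<exists>i. 1 \<le> i \<and> real i \<le> C * ln (real n) \<and> grad (grid_V n) (grid_E n) (possible_set (grid_V n) (grid_E n) m c i) \<le> 8"
    proof (cases "n \<le> 9")
      case True
      define M where "M = possible_set (grid_V n) (grid_E n) m c 1"
      have "grad (grid_V n) (grid_E n) M \<le> 8"
      proof (rule grad_box[of M n "m 1" 1 N 1 N])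
        show "M \<subseteq> grid_V n" unfolding M_def using poss_V by blast
        show "m 1 \<in> M" unfolding M_def using m_possible[OF g] by simp
        show "\<forall>p\<in>M. 1 \<le> int (fst p) \<and> int (fst p) \<le> N \<and> 1 \<le> int (snd p) \<and> int (snd p) \<le> N"
          using poss_V gV unfolding M_def N_def by blast
      qed (use True n2 N_def in auto)
      then show ?thesis using Cln unfolding M_def by (intro exI[of _ 1]) auto
    next
      case False
      then have n3: "n \<ge> 3" by simp
      define K where "K = nat \<lceil>log 2 (real n)\<rceil> + 2"
      have Kb: "3 * N < 4 ^ K" "real (6 * K) \<le> C * ln (real n)"
        using K_bound[OF n2] unfolding K_def C_def N_def by auto
      define B where "B = answer (grid_E n) m c"
      define i where "i = 6 * K"
      have i1: "1 \<le> i" unfolding i_def K_def by simp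
      define M where "M = possible_set (grid_V n) (grid_E n) m c i"
      have N1: "N \<ge> 1" using n2 N_def by simp
      have fw: "wid (XX N B i) \<le> 8 \<and> wid (YY N B i) \<le> 8" unfolding i_def using final_width[OF N1 Kb(1)] .
      have br: "1 \<le> fst (XX N B i) \<and> snd (XX N B i) \<le> N \<and> 1 \<le> fst (YY N B i) \<and> snd (YY N B i) \<le> N"
        using box_range[OF N1] .
      have "grad (grid_V n) (grid_E n) M \<le> 8"
      proof (rule grad_box[of M n "m i" "fst (XX N B i)" "snd (XX N B i)" "fst (YY N B i)" "snd (YY N B i)"])
        show "M \<subseteq> grid_V n" unfolding M_def using poss_V i1 by blast
        show "m i \<in> M" unfolding M_def using m_possible[OF g i1] .
        show "\<forall>p\<in>M. fst (XX N B i) \<le> int (fst p) \<and> int (fst p) \<le> snd (XX N B i) \<and> fst (YY N B i) \<le> int (snd p) \<and> int (snd p) \<le> snd (YY N B i)"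
          using possible_box[OF n3 N_def fo i1] unfolding M_def B_def inbox_def by blast
      qed (use br fw N_def in auto)
      then show ?thesis using Kb(2) i1 unfolding M_def i_def by (intro exI[of _ "6*K"]) auto
    qed
  qed
qed


end
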